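(* Let $\Gamma$ be a $k$-regular graph on $n$ vertices and let $g$ be an automorphism of $\Gamma$ with no fixed vertices. Then the number of $1$-factors (perfect matchings) of $\Gamma$ that are mapped onto themselves by $g$ is at most $(8\mathrm{e}k)^{n/4}$.
   Context: A $1$-factor of a graph is a set of edges such that every vertex lies in exactly one of them. A $1$-factor $F$ is fixed by $g$ if $g(F)=F$ as a set of edges. Here $\mathrm{e}$ is Euler's number. *)

theory Defs
  imports Complex_Main
begin

definition simple_graph :: "'a set \<Rightarrow> 'a set set \<Rightarrow> bool" where
  "simple_graph V E \<longleftrightarrow> finite V \<and>
     (\<forall>e\<in>E. \<exists>u v. e = {u, v} \<and> u \<noteq> v \<and> u \<in> V \<and> v \<in> V)"

definition degree :: "'a set \<Rightarrow> 'a set set \<Rightarrow> 'a \<Rightarrow> nat" where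
  "degree V E v = card {u \<in> V. {u, v} \<in> E}"

definition regular :: "'a set \<Rightarrow> 'a set set \<Rightarrow> nat \<Rightarrow> bool" where
  "regular V E k \<longleftrightarrow> (\<forall>v\<in>V. degree V E v = k)"

definition graph_automorphism :: "'a set \<Rightarrow> 'a set set \<Rightarrow> ('a \<Rightarrow> 'a) \<Rightarrow> bool" where
  "graph_automorphism V E g \<longleftrightarrow> bij_betw g V V \<and>
     (\<forall>u\<in>V. \<forall>v\<in>V. {u, v} \<in> E \<longleftrightarrow> {g u, g v} \<in> E)"

definition one_factor :: "'a set \<Rightarrow> 'a set set \<Rightarrow> 'a set set \<Rightarrow> bool" where
  "one_factor V E F \<longleftrightarrow> F \<subseteq> E \<and> (\<forall>v\<in>V. \<exists>!e. e \<in> F \<and> v \<in> e)"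

definition fixed_by :: "('a \<Rightarrow> 'a) \<Rightarrow> 'a set set \<Rightarrow> bool" where
  "fixed_by g F \<longleftrightarrow> (\<lambda>e. g ` e) ` F = F"

end

theory Submission
  imports Defs
begin

lemma funpow_cancel:
  assumes S: "h ` S \<subseteq> S" "inj_on h S" "x \<in> S"
  shows "(h^^i) x = (h^^(i+d)) x \<Longrightarrow> x = (h^^d) x"
proof (induction i)
  case 0 then show ?case by simp
next
  case (Suc i)
  have inS: "\<And>n. (h^^n) x \<in> S"
  proof -
    fix n show "(h^^n) x \<in> S" by (induction n) (use S in auto)
  qed
  have "h ((h^^i) x) = h ((h^^(i+d)) x)" using Suc.prems by simp
  then have "(h^^i) x = (h^^(i+d)) x" using S(2) inS by (meson inj_onD)
  then show ?case using Suc.IH by simp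
qed

lemma funpow_period:
  assumes "finite S" "h ` S \<subseteq> S" "inj_on h S" "x \<in> S"
  shows "\<exists>p>0. (h^^p) x = x"
proof -
  have inS: "\<And>n. (h^^n) x \<in> S"
  proof -
    fix n show "(h^^n) x \<in> S" by (induction n) (use assms in auto)
  qed
  have "range (\<lambda>i. (h^^i) x) \<subseteq> S" using inS by auto
  then have fin: "finite (range (\<lambda>i. (h^^i) x))" using assms(1) finite_subset by blast
  have "\<not> inj (\<lambda>i. (h^^i) x)"
    using finite_imageD[OF fin] by auto
  then obtain i j where ij: "i \<noteq> j" "(h^^i) x = (h^^j) x" unfolding inj_def by auto
  show ?thesis
  proof (cases "i < j")
    case True
    then have "(h^^i) x = (h^^(i+(j-i))) x" using ij by simp
    then have "x = (h^^(j-i)) x" using funpow_cancel[OF assms(2-4)] by blast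
    then show ?thesis using True by (intro exI[of _ "j-i"]) auto
  next
    case False
    then have "(h^^j) x = (h^^(j+(i-j))) x" using ij by simp
    then have "x = (h^^(i-j)) x" using funpow_cancel[OF assms(2-4)] by blast
    then show ?thesis using False ij(1) by (intro exI[of _ "i-j"]) auto
  qed
qed

locale fmctx =
  fixes V :: "'a set" and E :: "'a set set" and g :: "'a \<Rightarrow> 'a" and k :: nat
  assumes sg: "simple_graph V E"
    and reg: "regular V E k"
    and aut: "graph_automorphism V E g"
    and nofix: "\<forall>v\<in>V. g v \<noteq> v"
begin

definition M :: "'a set \<Rightarrow> 'a set set set" where
  "M W = {F. F \<subseteq> E \<and> (\<forall>e\<in>F. e \<subseteq> W) \<and> (\<forall>v\<in>W. \<exists>!e. e\<in>F \<and> v\<in>e) \<and> image g ` F = F}"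

definition Dw :: "'a \<Rightarrow> 'a \<Rightarrow> 'a set set" where
  "Dw v w = range (\<lambda>i. (image g ^^ i) {v,w})"

lemma finV: "finite V" using sg unfolding simple_graph_def by auto

lemma edgeE: "e \<in> E \<Longrightarrow> \<exists>a b. e = {a,b} \<and> a \<noteq> b \<and> a \<in> V \<and> b \<in> V"
  using sg unfolding simple_graph_def by auto

lemma EPow: "E \<subseteq> Pow V" using edgeE by blast

lemma finE: "finite E" using EPow finV finite_subset by blast

lemma injg: "inj_on g V" and gV: "g ` V = V"
  using aut unfolding graph_automorphism_def bij_betw_def by auto

lemma finM: "finite (M X)"
proof -
  have "M X \<subseteq> Pow E" unfolding M_def by auto
  then show ?thesis using finE by (meson finite_Pow_iff finite_subset)
qed

lemma M_empty: "M {} \<subseteq> {{}}"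
proof
  fix F assume F: "F \<in> M {}"
  have "F = {}"
  proof (rule ccontr)
    assume "F \<noteq> {}"
    then obtain e where e: "e \<in> F" by auto
    then have "e \<subseteq> {}" "e \<in> E" using F unfolding M_def by auto
    then show False using edgeE by fastforce
  qed
  then show "F \<in> {{}}" by simp
qed

lemma key:
  assumes F: "F \<in> M W" and W: "W \<subseteq> V" and v: "v \<in> W" and vw: "{v,w} \<in> F"
  shows "Dw v w \<subseteq> F" "\<Union>(Dw v w) \<subseteq> W" "F - Dw v w \<in> M (W - \<Union>(Dw v w))"
    "card (\<Union>(Dw v w)) \<ge> 2" "w \<noteq> g v \<Longrightarrow> card (\<Union>(Dw v w)) \<ge> 4"
proof -
  let ?h = "image g"
  let ?D = "Dw v w"
  have FE: "F \<subseteq> E" and FW: "\<forall>e\<in>F. e \<subseteq> W" and Fu: "\<forall>u\<in>W. \<exists>!e. e\<in>F \<and> u\<in>e"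
    and Ff: "?h ` F = F" using F unfolding M_def by auto
  have hi: "(?h ^^ i) {v,w} \<in> F" for i
    by (induction i) (use vw Ff in auto)
  show DF: "?D \<subseteq> F" unfolding Dw_def using hi by auto
  then show DW: "\<Union>?D \<subseteq> W" using FW by auto
  have vwV: "{v,w} \<in> Pow V" using vw FW W by blast
  have hPow: "?h ` Pow V \<subseteq> Pow V" using gV by auto
  have hinj: "inj_on ?h (Pow V)" using inj_on_image_Pow[OF injg] .
  obtain p where p: "p > 0" "(?h ^^ p) {v,w} = {v,w}"
    using funpow_period[OF _ hPow hinj vwV] finV by auto
  have hD: "?h ` ?D = ?D"
  proof
    show "?h ` ?D \<subseteq> ?D"
    proof
      fix d assume "d \<in> ?h ` ?D"
      then obtain i where "d = ?h ((?h ^^ i) {v,w})" unfolding Dw_def by auto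
      then have "d = (?h ^^ Suc i) {v,w}" by simp
      then show "d \<in> ?D" unfolding Dw_def by blast
    qed
  next
    show "?D \<subseteq> ?h ` ?D"
    proof
      fix d assume "d \<in> ?D"
      then obtain i where d: "d = (?h ^^ i) {v,w}" unfolding Dw_def by auto
      show "d \<in> ?h ` ?D"
      proof (cases i)
        case 0
        then have "d = ?h ((?h ^^ (p - 1)) {v,w})" using d p
          by (metis Suc_diff_1 comp_apply funpow.simps(2) funpow_0)
        then show ?thesis unfolding Dw_def by auto
      next
        case (Suc j)
        then have "d = ?h ((?h ^^ j) {v,w})" using d by simp
        then show ?thesis unfolding Dw_def by auto
      qed
    qed
  qed
  have FPow: "F \<subseteq> Pow V" using FW W by auto
  show "F - ?D \<in> M (W - \<Union>?D)"
    unfolding M_def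
  proof (intro CollectI conjI ballI)
    show "F - ?D \<subseteq> E" using FE by auto
  next
    fix e assume e: "e \<in> F - ?D"
    show "e \<subseteq> W - \<Union>?D"
    proof
      fix u assume u: "u \<in> e"
      have uW: "u \<in> W" using e u FW by auto
      have "u \<notin> \<Union>?D"
      proof
        assume "u \<in> \<Union>?D"
        then obtain d where d: "d \<in> ?D" "u \<in> d" by auto
        then have "d = e" using Fu uW e u DF by blast
        then show False using d e by auto
      qed
      then show "u \<in> W - \<Union>?D" using uW by auto
    qed
  next
    fix u assume u: "u \<in> W - \<Union>?D"
    then obtain e where e: "e \<in> F" "u \<in> e" using Fu by blast
    have "e \<notin> ?D" using e u by auto
    then show "\<exists>!e. e \<in> F - ?D \<and> u \<in> e" using e Fu u by blast
  next
    have "?h ` (F - ?D) = ?h ` F - ?h ` ?D"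
    proof (rule inj_on_image_set_diff[OF hinj])
      show "F - ?D \<subseteq> Pow V" using FPow by blast
      show "?D \<subseteq> Pow V" using FPow DF by blast
    qed
    then show "?h ` (F - ?D) = F - ?D" by (simp only: Ff hD)
  qed
  have finU: "finite (\<Union>?D)" using finite_subset[OF DW finite_subset[OF W finV]] .
  have vwD: "{v,w} \<in> ?D" unfolding Dw_def by (metis funpow_0 rangeI)
  have gvwD: "{g v, g w} \<in> ?D" unfolding Dw_def
    by (rule range_eqI[of _ _ 1]) simp
  have vV: "v \<in> V" using v W by auto
  obtain a b where ab: "{v,w} = {a,b}" "a \<noteq> b" "a \<in> V" "b \<in> V" using edgeE vw FE by blast
  have vnw: "v \<noteq> w" using ab by auto
  have wV: "w \<in> V" using ab by auto
  have "{v,w} \<subseteq> \<Union>?D" using vwD by auto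
  then have "card {v,w} \<le> card (\<Union>?D)" using card_mono finU by blast
  then show "card (\<Union>?D) \<ge> 2" using vnw by simp
  assume wg: "w \<noteq> g v"
  have gw: "g w \<noteq> w" using nofix wV by auto
  have gv: "g v \<noteq> v" using nofix vV by auto
  have gvgw: "g v \<noteq> g w" using injg vV wV vnw by (meson inj_onD)
  have gwv: "g w \<noteq> v"
  proof
    assume gwv: "g w = v"
    have "{g v, g w} \<in> F" using gvwD DF by auto
    then have "{g v, g w} = {v,w}" using Fu v vw gwv by blast
    then show False using gwv gv wg by (auto simp: doubleton_eq_iff)
  qed
  have "{v,w,g v,g w} \<subseteq> \<Union>?D" using vwD gvwD by auto
  then have "card {v,w,g v,g w} \<le> card (\<Union>?D)" using card_mono finU by blast
  then show "card (\<Union>?D) \<ge> 4" using vnw gw gv gvgw gwv wg by auto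
qed


definition Nb :: "'a \<Rightarrow> 'a set" where "Nb v = {u \<in> V. {u, v} \<in> E}"

definition Aset :: "'a set \<Rightarrow> 'a \<Rightarrow> 'a set" where
  "Aset W v = {w \<in> Nb v. \<exists>F\<in>M W. {v,w} \<in> F}"

lemma card_Nb: "v \<in> V \<Longrightarrow> card (Nb v) = k"
  using reg unfolding regular_def degree_def Nb_def by auto

lemma fin_Nb: "finite (Nb v)" unfolding Nb_def using finV by auto

lemma Aset_sub: "Aset W v \<subseteq> Nb v" unfolding Aset_def by blast

lemma card_Aset: "v \<in> V \<Longrightarrow> card (Aset W v) \<le> k"
  using card_mono[OF fin_Nb Aset_sub] card_Nb by metis

lemma fin_Aset: "finite (Aset W v)"
  using finite_subset[OF Aset_sub fin_Nb] .

lemma has_partner: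
  assumes F: "F \<in> M W" and v: "v \<in> W"
  shows "\<exists>w. {v,w} \<in> F"
proof -
  have u: "\<forall>v\<in>W. \<exists>!e. e\<in>F \<and> v\<in>e" and FE: "F \<subseteq> E" using F unfolding M_def by auto
  have "\<exists>!e. e\<in>F \<and> v\<in>e" using u v by (rule bspec)
  then obtain e where e: "e \<in> F" "v \<in> e" by (meson ex1E)
  then have "e \<in> E" using FE by (meson subsetD)
  then obtain a b where ab: "e = {a,b}" using edgeE by blast
  show ?thesis
  proof (cases "v = a")
    case True then show ?thesis using e ab by blast
  next
    case False then have "v = b" using e ab by blast
    then show ?thesis using e ab by (metis insert_commute)
  qed
qed

lemma step:
  assumes W: "W \<subseteq> V" and v: "v \<in> W"
  shows "card (M W) \<le> (\<Sum>w\<in>Aset W v. card (M (W - \<Union>(Dw v w))))"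
proof -
  define wF where "wF F = (SOME w. {v,w} \<in> F)" for F
  define \<Phi> where "\<Phi> F = (wF F, F - Dw v (wF F))" for F
  have wF: "{v, wF F} \<in> F" if "F \<in> M W" for F
    unfolding wF_def using has_partner[OF that v] by (rule someI_ex)
  have vV: "v \<in> V" using W v by auto
  have inA: "wF F \<in> Aset W v" if F: "F \<in> M W" for F
  proof -
    have FE: "F \<subseteq> E" using F unfolding M_def by blast
    have e: "{v, wF F} \<in> E" using wF[OF F] FE by (meson subsetD)
    then have "{v, wF F} \<subseteq> V" using EPow by blast
    then have "wF F \<in> Nb v" unfolding Nb_def using e by (simp add: insert_commute)
    then show ?thesis unfolding Aset_def using F wF[OF F] by blast
  qed
  have maps: "\<Phi> ` M W \<subseteq> Sigma (Aset W v) (\<lambda>w. M (W - \<Union>(Dw v w)))"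
  proof
    fix x assume "x \<in> \<Phi> ` M W"
    then obtain F where F: "F \<in> M W" and x: "x = \<Phi> F" by blast
    show "x \<in> Sigma (Aset W v) (\<lambda>w. M (W - \<Union>(Dw v w)))"
      unfolding x \<Phi>_def using inA[OF F] key(3)[OF F W v wF[OF F]] by (rule SigmaI)
  qed
  have inj: "inj_on \<Phi> (M W)"
  proof (rule inj_onI)
    fix F1 F2 assume F1: "F1 \<in> M W" and F2: "F2 \<in> M W" and eq: "\<Phi> F1 = \<Phi> F2"
    have "(wF F1, F1 - Dw v (wF F1)) = (wF F2, F2 - Dw v (wF F2))"
      using eq unfolding \<Phi>_def .
    then have wd: "wF F1 = wF F2 \<and> F1 - Dw v (wF F1) = F2 - Dw v (wF F2)"
      by (rule prod.inject[THEN iffD1])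
    note w = conjunct1[OF wd] and d = conjunct2[OF wd]
    have s1: "Dw v (wF F1) \<subseteq> F1" using key(1)[OF F1 W v wF[OF F1]] .
    have s2: "Dw v (wF F1) \<subseteq> F2" using key(1)[OF F2 W v wF[OF F2]] unfolding w .
    show "F1 = F2"
    proof -
      have "F1 = (F1 - Dw v (wF F1)) \<union> Dw v (wF F1)" using s1 by blast
      also have "\<dots> = (F2 - Dw v (wF F1)) \<union> Dw v (wF F1)" using d w by (simp only:)
      also have "\<dots> = F2" using s2 by blast
      finally show ?thesis .
    qed
  qed
  have "card (M W) \<le> card (Sigma (Aset W v) (\<lambda>w. M (W - \<Union>(Dw v w))))"
    using card_inj_on_le[OF inj maps] fin_Aset finM by (auto intro!: finite_SigmaI)
  also have "\<dots> = (\<Sum>w\<in>Aset W v. card (M (W - \<Union>(Dw v w))))"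
    using fin_Aset finM by simp
  finally show ?thesis .
qed

lemma Aset_facts:
  assumes W: "W \<subseteq> V" and v: "v \<in> W" and w: "w \<in> Aset W v"
  shows "\<Union>(Dw v w) \<subseteq> W" "card (\<Union>(Dw v w)) \<ge> 2" "w \<noteq> g v \<Longrightarrow> card (\<Union>(Dw v w)) \<ge> 4"
proof -
  obtain F where F: "F \<in> M W" "{v,w} \<in> F" using w unfolding Aset_def by auto
  show "\<Union>(Dw v w) \<subseteq> W" "card (\<Union>(Dw v w)) \<ge> 2" "w \<noteq> g v \<Longrightarrow> card (\<Union>(Dw v w)) \<ge> 4"
    using key[OF F(1) W v F(2)] by auto
qed

lemma main_bound:
  fixes y :: real
  assumes y1: "y \<ge> 1" and yk: "y^2 + real k \<le> y^4"
  shows "W \<subseteq> V \<Longrightarrow> real (card (M W)) \<le> y ^ card W"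
proof (induction "card W" arbitrary: W rule: less_induct)
  case less
  note W = less.prems
  have finW: "finite W" using W finV finite_subset by blast
  show ?case
  proof (cases "W = {}")
    case True
    then have "card (M W) \<le> 1" using M_empty card_mono[of "{{}}" "M W"] by auto
    then show ?thesis using True by simp
  next
    case False
    then obtain v where v: "v \<in> W" by auto
    have vV: "v \<in> V" using v W by auto
    let ?c = "card W"
    let ?a = "y ^ ?c / y^2" and ?b = "y ^ ?c / y^4"
    have ypos: "y > 0" using y1 by simp
    have bnd: "real (card (M (W - \<Union>(Dw v w)))) \<le> ?b + (if w = g v then ?a else 0)"
      if w: "w \<in> Aset W v" for w
    proof -
      note af = Aset_facts[OF W v w]
      let ?U = "\<Union>(Dw v w)"
      have finU: "finite ?U" using finite_subset[OF af(1) finW] .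
      have cd: "card (W - ?U) = ?c - card ?U" using card_Diff_subset[OF finU af(1)] .
      have cU: "card ?U \<le> ?c" using card_mono[OF finW af(1)] .
      have IH: "real (card (M (W - ?U))) \<le> y ^ card (W - ?U)"
        using less.hyps[of "W - ?U"] cd af(2) cU W by auto
      have ab0: "?a \<ge> 0" "?b \<ge> 0" using ypos by auto
      show ?thesis
      proof (cases "w = g v")
        case True
        have "y ^ card (W - ?U) * y^2 = y ^ (card (W - ?U) + 2)" by (rule power_add[symmetric])
        also have "\<dots> \<le> y ^ ?c" using cd af(2) cU y1 by (intro power_increasing) auto
        finally have "y ^ card (W - ?U) \<le> ?a" using ypos by (simp add: pos_le_divide_eq)
        then show ?thesis using IH True ab0 by auto
      next
        case False
        have "y ^ card (W - ?U) * y^4 = y ^ (card (W - ?U) + 4)" by (rule power_add[symmetric])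
        also have "\<dots> \<le> y ^ ?c" using cd af(3)[OF False] cU y1 by (intro power_increasing) auto
        finally have "y ^ card (W - ?U) \<le> ?b" using ypos by (simp add: pos_le_divide_eq)
        then show ?thesis using IH False ab0 by auto
      qed
    qed
    have "real (card (M W)) \<le> (\<Sum>w\<in>Aset W v. real (card (M (W - \<Union>(Dw v w)))))"
      using step[OF W v] by (simp add: of_nat_sum[symmetric] del: of_nat_sum)
    also have "\<dots> \<le> (\<Sum>w\<in>Aset W v. ?b + (if w = g v then ?a else 0))"
      using bnd by (intro sum_mono) auto
    also have "\<dots> = real (card (Aset W v)) * ?b + (if g v \<in> Aset W v then ?a else 0)"
      using fin_Aset by (simp add: sum.distrib)
    also have "\<dots> \<le> real k * ?b + ?a"
      using card_Aset[OF vV] ypos by (intro add_mono mult_right_mono) auto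
    also have "\<dots> = y ^ ?c * ((y^2 + real k) / y^4)"
      using ypos by (simp add: field_simps power_add[symmetric] eval_nat_numeral)
    also have "\<dots> \<le> y ^ ?c * 1"
      using yk ypos by (intro mult_left_mono) auto
    finally show ?thesis by simp
  qed
qed

end

theorem mainTheorem2:
  fixes V :: "'a set" and E :: "'a set set" and g :: "'a \<Rightarrow> 'a" and k n :: nat
  assumes "simple_graph V E"
    and "card V = n"
    and "regular V E k"
    and "graph_automorphism V E g"
    and "\<forall>v\<in>V. g v \<noteq> v"
  shows "real (card {F. one_factor V E F \<and> fixed_by g F}) ^ 4 \<le> (8 * exp 1 * real k) ^ n"
proof -
  interpret fmctx V E g k using assms(1,3,4,5) by unfold_locales
  have EV: "\<And>e. e \<in> E \<Longrightarrow> e \<subseteq> V" using EPow by blast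
  have eqM: "{F. one_factor V E F \<and> fixed_by g F} = M V"
  proof (rule set_eqI)
    fix F
    show "F \<in> {F. one_factor V E F \<and> fixed_by g F} \<longleftrightarrow> F \<in> M V"
    proof
      assume "F \<in> {F. one_factor V E F \<and> fixed_by g F}"
      then have a: "F \<subseteq> E" "\<forall>v\<in>V. \<exists>!e. e \<in> F \<and> v \<in> e" "image g ` F = F"
        unfolding one_factor_def fixed_by_def by auto
      have "\<forall>e\<in>F. e \<subseteq> V" using a(1) EV by blast
      then show "F \<in> M V" unfolding M_def using a by (intro CollectI conjI)
    next
      assume "F \<in> M V"
      then have a: "F \<subseteq> E" "\<forall>v\<in>V. \<exists>!e. e \<in> F \<and> v \<in> e" "image g ` F = F"
        unfolding M_def by auto
      then show "F \<in> {F. one_factor V E F \<and> fixed_by g F}"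
        unfolding one_factor_def fixed_by_def by (intro CollectI conjI)
    qed
  qed
  show ?thesis
  proof (cases "k = 0")
    case True
    show ?thesis
    proof (cases "V = {}")
      case True
      then have "card (M V) \<le> 1" using M_empty card_mono[of "{{}}" "M V"] by auto
      then show ?thesis using True assms(2) eqM by (simp add: power_le_one)
    next
      case False
      then obtain v where v: "v \<in> V" by auto
      have "Aset V v = {}" using card_Aset[OF v, of V] True fin_Aset[of V v] by simp
      then have "card (M V) = 0" using step[OF subset_refl v] by simp
      then show ?thesis using eqM by simp
    qed
  next
    case False
    define t where "t = 8 * exp 1 * real k"
    have e2: "exp 1 \<ge> (2::real)" using exp_ge_add_one_self[of 1] by simp
    have k1: "real k \<ge> 1" using False by simp
    have "8 * exp 1 * real k \<ge> 8 * 2 * 1" by (intro mult_mono) (use e2 k1 in auto)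
    then have t16: "t \<ge> 16" unfolding t_def by simp
    define y where "y = sqrt (sqrt t)"
    have t0: "t \<ge> 0" using t16 by simp
    have y2: "y^2 = sqrt t" unfolding y_def using t0 by simp
    have y4: "y^4 = t"
    proof -
      have "y^4 = (y^2)^2" by simp
      then show ?thesis using y2 t0 by simp
    qed
    have y1: "y \<ge> 1" unfolding y_def using t16 by simp
    have st: "sqrt t \<ge> 4" using t16 real_sqrt_le_mono[of 16 t] by simp
    have "sqrt t * sqrt t = t" using t0 by simp
    moreover have "sqrt t * 2 \<le> sqrt t * sqrt t" using st t0 by (intro mult_left_mono) auto
    ultimately have "sqrt t \<le> t / 2" by simp
    moreover have "real k * 1 \<le> real k * (4 * exp 1)" using e2 by (intro mult_left_mono) auto
    then have "real k \<le> t / 2" unfolding t_def by simp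
    ultimately have yk: "y^2 + real k \<le> y^4" using y2 y4 by linarith
    have b: "real (card (M V)) \<le> y ^ n" using main_bound[OF y1 yk subset_refl] assms(2) by simp
    have "real (card (M V)) ^ 4 \<le> (y ^ n) ^ 4" using b by (intro power_mono) auto
    also have "\<dots> = (y^4) ^ n" by (simp flip: power_mult add: mult.commute)
    finally show ?thesis using eqM y4 t_def by simp
  qed
qed

end
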